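(* For every $\Delta\in(0,1)$, if $N\ge164k^2\ln(4R/\Delta)+\frac{100\ln(2/\Delta)}{1-\tau}$, then with probability at least $1-\Delta$, $1-\widehat\tau\ge\frac{1-\tau}{8}$.
   Context: Let $R\ge 2$ be an integer and $\rho=(\rho_1,\dots,\rho_R)$ a probability vector with $\rho_r>0$ for all $r$. Let $Y_1,\dots,Y_N$ be i.i.d. labels with $\mathbb P(Y_j=r)=\rho_r$, $N_r=|\{j:Y_j=r\}|$, $\widehat\rho_r=N_r/N$. Fix an integer $k\ge1$. Set $\tau:=1-\sum_{r}\rho_r(1-\rho_r)^k$ and $\widehat\tau:=1-\sum_r\widehat\rho_r(1-\widehat\rho_r)^k$. *)

theory Defs
  imports "HOL-Probability.Probability"
begin

text \<open>Labels take values in {1..R}; their common law is the pmf p, so rho r = pmf p r.\<close>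

definition tau :: "nat pmf \<Rightarrow> nat \<Rightarrow> nat \<Rightarrow> real" where
  "tau p R k = 1 - (\<Sum>r\<in>{1..R}. pmf p r * (1 - pmf p r) ^ k)"

definition rho_hat :: "nat \<Rightarrow> (nat \<Rightarrow> nat) \<Rightarrow> nat \<Rightarrow> real" where
  "rho_hat N Y r = real (card {j \<in> {..<N}. Y j = r}) / real N"

definition tau_hat :: "nat \<Rightarrow> nat \<Rightarrow> nat \<Rightarrow> (nat \<Rightarrow> nat) \<Rightarrow> real" where
  "tau_hat N R k Y = 1 - (\<Sum>r\<in>{1..R}. rho_hat N Y r * (1 - rho_hat N Y r) ^ k)"

end

theory Submission
  imports Defs "HOL-Analysis.Analysis"
begin

lemma exp_lin_bound:
  fixes l x :: real assumes "0 \<le> x" "x \<le> 1"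
  shows "exp (l * x) \<le> 1 + x * (exp l - 1)"
proof -
  have "exp ((1 - x) *\<^sub>R 0 + x *\<^sub>R l) \<le> (1 - x) * exp 0 + x * exp l"
    by (rule convex_onD[OF exp_convex]) (use assms in auto)
  thus ?thesis by (simp add: algebra_simps)
qed

lemma mgf_Pi:
  fixes p :: "nat pmf" and g :: "nat \<Rightarrow> real" and l :: real
  assumes fin: "finite (set_pmf p)" and g01: "\<And>x. 0 \<le> g x \<and> g x \<le> 1"
  shows "measure_pmf.expectation (Pi_pmf {..<N} 0 (\<lambda>_. p)) (\<lambda>Y. exp (l * (\<Sum>j<N. g (Y j))))
          \<le> exp (real N * measure_pmf.expectation p g * (exp l - 1))"
proof -
  define S where "S = set_pmf p"
  have E: "measure_pmf.expectation p h = (\<Sum>a\<in>S. pmf p a * h a)" for h :: "nat \<Rightarrow> real"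
    unfolding S_def by (subst integral_measure_pmf[OF fin]) auto
  have "(\<lambda>Y. exp (l * (\<Sum>j<N. g (Y j)))) = (\<lambda>Y. \<Prod>j<N. exp (l * g (Y j)))"
    by (simp add: sum_distrib_left exp_sum)
  hence "measure_pmf.expectation (Pi_pmf {..<N} 0 (\<lambda>_. p)) (\<lambda>Y. exp (l * (\<Sum>j<N. g (Y j))))
      = (\<Prod>j<N. measure_pmf.expectation p (\<lambda>v. exp (l * g v)))"
    by (simp only:) (rule expectation_prod_Pi_pmf, auto intro: integrable_measure_pmf_finite[OF fin])
  also have "\<dots> = (measure_pmf.expectation p (\<lambda>v. exp (l * g v))) ^ N" by simp
  also have "\<dots> \<le> (exp (measure_pmf.expectation p g * (exp l - 1))) ^ N"
  proof (rule power_mono)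
    have "measure_pmf.expectation p (\<lambda>v. exp (l * g v)) \<le> (\<Sum>a\<in>S. pmf p a * (1 + g a * (exp l - 1)))"
      unfolding E by (intro sum_mono mult_left_mono exp_lin_bound) (use g01 in auto)
    also have "\<dots> = (\<Sum>a\<in>S. pmf p a) + (\<Sum>a\<in>S. pmf p a * g a) * (exp l - 1)"
      by (simp add: distrib_left sum.distrib sum_distrib_right mult.assoc)
    also have "(\<Sum>a\<in>S. pmf p a) = 1" unfolding S_def by (rule sum_pmf_eq_1[OF fin]) auto
    also have "1 + (\<Sum>a\<in>S. pmf p a * g a) * (exp l - 1) \<le> exp (measure_pmf.expectation p g * (exp l - 1))"
      unfolding E by (rule exp_ge_add_one_self)
    finally show "measure_pmf.expectation p (\<lambda>v. exp (l * g v)) \<le> exp (measure_pmf.expectation p g * (exp l - 1))" .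
    show "0 \<le> measure_pmf.expectation p (\<lambda>v. exp (l * g v))" by simp
  qed
  also have "\<dots> = exp (real N * measure_pmf.expectation p g * (exp l - 1))"
    by (subst exp_of_nat_mult[symmetric]) (simp add: mult.assoc)
  finally show ?thesis .
qed

lemma tail_Pi:
  fixes p :: "nat pmf" and g :: "nat \<Rightarrow> real" and l s :: real
  assumes fin: "finite (set_pmf p)" and g01: "\<And>x. 0 \<le> g x \<and> g x \<le> 1"
  shows "measure_pmf.prob (Pi_pmf {..<N} 0 (\<lambda>_. p)) {Y. l * s \<le> l * (\<Sum>j<N. g (Y j))}
          \<le> exp (real N * measure_pmf.expectation p g * (exp l - 1) - l * s)"
proof -
  let ?M = "Pi_pmf {..<N} 0 (\<lambda>_. p)"
  have fin2: "finite (set_pmf ?M)"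
  proof (rule finite_subset[OF set_Pi_pmf_subset'])
    show "finite (PiE_dflt {..<N} 0 (set_pmf \<circ> (\<lambda>_. p)))"
      using fin by (intro finite_PiE_dflt) auto
  qed simp
  have "{Y. l * s \<le> l * (\<Sum>j<N. g (Y j))} = {Y \<in> space ?M. exp (l * s) \<le> exp (l * (\<Sum>j<N. g (Y j)))}"
    by simp
  hence "measure_pmf.prob ?M {Y. l * s \<le> l * (\<Sum>j<N. g (Y j))}
     \<le> measure_pmf.expectation ?M (\<lambda>Y. exp (l * (\<Sum>j<N. g (Y j)))) / exp (l * s)"
    by (simp only:) (rule integral_Markov_inequality_measure, auto intro: integrable_measure_pmf_finite[OF fin2])
  also have "\<dots> \<le> exp (real N * measure_pmf.expectation p g * (exp l - 1)) / exp (l * s)"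
    by (intro divide_right_mono mgf_Pi fin g01) auto
  also have "\<dots> = exp (real N * measure_pmf.expectation p g * (exp l - 1) - l * s)"
    by (simp add: exp_diff)
  finally show ?thesis .
qed

lemma key_pow:
  fixes rho t :: real and k :: nat
  assumes "0 \<le> t" "2 * k * t \<le> 1" "0 \<le> rho" "rho \<le> 1/2" "t \<le> 1/2"
  shows "(1 - rho) ^ k * (1 - 2 * k * t) \<le> (1 - rho - t) ^ k"
proof -
  define d where "d = 1 - rho"
  have d: "d \<ge> 1/2" "d \<le> 1" using assms by (auto simp: d_def)
  have "t * 1 \<le> t * (2 * d)" using d assms by (intro mult_left_mono) auto
  hence "t / d \<le> 2 * t" using d assms by (simp add: divide_simps)
  have "real k * (t / d) \<le> real k * (2 * t)"
    using \<open>t / d \<le> 2 * t\<close> by (intro mult_left_mono) auto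
  hence "1 - 2 * k * t \<le> 1 + real k * (- (t / d))" by simp
  also have "\<dots> \<le> (1 + (- (t / d))) ^ k"
    by (rule Bernoulli_inequality) (use \<open>t / d \<le> 2 * t\<close> assms in auto)
  finally have "d ^ k * (1 - 2 * k * t) \<le> d ^ k * (1 - t / d) ^ k"
    using d by (intro mult_left_mono) auto
  also have "\<dots> = (d - t) ^ k"
    using d by (simp add: power_mult_distrib[symmetric] algebra_simps)
  finally show ?thesis by (simp add: d_def)
qed

lemma AG_bound:
  fixes rho :: "nat \<Rightarrow> real" and k :: nat and I :: "nat set"
  assumes fin: "finite I" and nn: "\<forall>r\<in>I. 0 \<le> rho r" and s1: "(\<Sum>r\<in>I. rho r) = 1" and k: "k \<ge> 1"
  shows "(\<Sum>r\<in>I. rho r * (1 - rho r) ^ k) \<le> 3 * (\<Sum>r\<in>{r\<in>I. rho r \<le> 1/2}. rho r * (1 - rho r) ^ k)"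
proof -
  have le1: "rho r \<le> 1" if "r \<in> I" for r
    using member_le_sum[of r I rho] that nn fin s1 by auto
  show ?thesis
  proof (cases "\<forall>r\<in>I. rho r \<le> 1/2")
    case True
    hence "{r\<in>I. rho r \<le> 1/2} = I" by auto
    moreover have "0 \<le> (\<Sum>r\<in>I. rho r * (1 - rho r) ^ k)"
      using nn le1 by (intro sum_nonneg) auto
    ultimately show ?thesis by simp
  next
    case False
    then obtain m where m: "m \<in> I" "rho m > 1/2" by auto
    define e where "e = 1 - rho m"
    have se: "(\<Sum>r\<in>I - {m}. rho r) = e"
      using sum.remove[OF fin m(1), of rho] s1 by (simp add: e_def)
    have small: "rho r \<le> e" if "r \<in> I - {m}" for r
      using member_le_sum[of r "I - {m}" rho] that nn fin se by auto
    have e: "0 \<le> e" "e < 1/2" using m le1 by (auto simp: e_def)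
    have G: "{r\<in>I. rho r \<le> 1/2} = I - {m}"
      using small e m by force
    define AG where "AG = (\<Sum>r\<in>I - {m}. rho r * (1 - rho r) ^ k)"
    have "(\<Sum>r\<in>I - {m}. rho r * (1 - e) ^ k) \<le> AG"
      unfolding AG_def using small nn e
      by (intro sum_mono mult_left_mono power_mono) auto
    moreover have "(\<Sum>r\<in>I - {m}. rho r * (1 - e) ^ k) = e * (1 - e) ^ k"
      using se by (simp add: sum_distrib_right[symmetric])
    ultimately have A1: "e * (1 - e) ^ k \<le> AG" by simp
    have tot: "(\<Sum>r\<in>I. rho r * (1 - rho r) ^ k) = rho m * e ^ k + AG"
      unfolding AG_def using sum.remove[OF fin m(1)] by (simp add: e_def)
    obtain k' where k': "k = Suc k'" using k by (cases k) auto
    have "e ^ k' \<le> (1 - e) ^ k'" using e by (intro power_mono) auto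
    hence "e ^ k = e * e ^ k'" "e * e ^ k' \<le> e * (1 - e) ^ k'"
      using e k' by (auto intro: mult_left_mono)
    moreover have "e * (1 - e) ^ k' \<le> 2 * (e * (1 - e) ^ k)"
    proof -
      have "(1 - e) ^ k' * 1 \<le> (1 - e) ^ k' * (2 * (1 - e))"
        using e by (intro mult_left_mono) auto
      thus ?thesis using e k' by (simp add: mult_left_mono algebra_simps)
    qed
    ultimately have "e ^ k \<le> 2 * (e * (1 - e) ^ k)" by linarith
    moreover have "rho m * e ^ k \<le> e ^ k"
      using le1[OF m(1)] e nn m by (intro mult_left_le_one_le) auto
    ultimately show ?thesis unfolding G using tot A1 unfolding AG_def by linarith
  qed
qed



lemma cnt_sum: fixes Y :: "nat \<Rightarrow> 'a" shows "(\<Sum>j<N. (if Y j = r then 1 else 0 :: real)) = real (card {j\<in>{..<N}. Y j = r})"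
proof -
  have "(\<Sum>j<N. (if Y j = r then 1 else 0 :: real)) = (\<Sum>j\<in>{j\<in>{..<N}. Y j = r}. 1)"
    by (subst sum.inter_filter) auto
  thus ?thesis by simp
qed

theorem mainTheorem5:
  fixes p :: "nat pmf" and R k N :: nat and \<Delta> :: real
  assumes "R \<ge> 2"
    and "set_pmf p \<subseteq> {1..R}"
    and "\<forall>r\<in>{1..R}. pmf p r > 0"
    and "k \<ge> 1"
    and "0 < \<Delta>" and "\<Delta> < 1"
    and "real N \<ge> 164 * real k ^ 2 * ln (4 * real R / \<Delta>) + 100 * ln (2 / \<Delta>) / (1 - tau p R k)"
  shows "measure_pmf.prob (Pi_pmf {..<N} 0 (\<lambda>_. p))
           {Y. 1 - tau_hat N R k Y \<ge> (1 - tau p R k) / 8} \<ge> 1 - \<Delta>"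
proof -
  define a where "a = 1 - tau p R k"
  have a_eq: "a = (\<Sum>r\<in>{1..R}. pmf p r * (1 - pmf p r) ^ k)" by (simp add: a_def tau_def)
  have fin: "finite (set_pmf p)" using assms(2) finite_subset by blast
  have s1: "(\<Sum>r\<in>{1..R}. pmf p r) = 1" by (rule sum_pmf_eq_1) (use assms(2) in auto)
  have a_pos: "a > 0"
  proof -
    have "(\<Sum>r\<in>{1,2}. pmf p r) \<le> (\<Sum>r\<in>{1..R}. pmf p r)"
      using assms(1) by (intro sum_mono2) auto
    hence "pmf p 1 + pmf p 2 \<le> 1" using s1 by simp
    moreover have "pmf p 1 > 0" "pmf p 2 > 0" using assms(1,3) by auto
    ultimately have "0 < pmf p 1 * (1 - pmf p 1) ^ k" by simp
    also have "\<dots> \<le> a" unfolding a_eq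
      using assms(1) by (intro member_le_sum) (auto simp: pmf_le_1)
    finally show ?thesis .
  qed
  define L where "L = ln (4 * real R / \<Delta>)"
  have L_pos: "L > 0" unfolding L_def using assms(1,5,6) by (simp add: field_simps)
  have l2: "ln (2 / \<Delta>) > 0" using assms(5,6) by (simp add: field_simps)
  have N7: "real N \<ge> 164 * real k ^ 2 * L + 100 * ln (2 / \<Delta>) / a"
    using assms(7) unfolding L_def a_def .
  have t1: "0 \<le> 164 * real k ^ 2 * L" using L_pos by simp
  have t2: "0 < 100 * ln (2 / \<Delta>) / a" using l2 a_pos by simp
  have Npos: "real N > 0" using N7 t1 t2 by linarith
  have NaL: "real N * a \<ge> 100 * ln (2 / \<Delta>)"
  proof -
    have "100 * ln (2 / \<Delta>) / a \<le> real N" using N7 t1 by linarith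
    thus ?thesis using a_pos by (simp add: divide_le_eq mult.commute)
  qed
  have NkL: "164 * real k ^ 2 * L \<le> real N" using N7 t2 by linarith
  define t where "t = sqrt (2 * L / real N)"
  have t_nn: "t > 0" unfolding t_def using L_pos Npos by simp
  have tsq: "t ^ 2 = 2 * L / real N" unfolding t_def using L_pos Npos by simp
  have Nt2: "real N * t ^ 2 = 2 * L" using tsq Npos by simp
  have kt: "real k * t \<le> 1/8"
  proof (rule power2_le_imp_le)
    have "(real k * t)^2 = real k ^ 2 * (2 * L) / real N" by (simp add: power_mult_distrib tsq)
    also have "\<dots> \<le> (1/8)^2"
    proof -
      have "0 \<le> real k ^ 2 * L" using L_pos by simp
      hence "real k ^ 2 * (2 * L) \<le> (1/8)^2 * real N" using NkL by (simp add: power2_eq_square)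
      thus ?thesis using Npos by (simp add: divide_le_eq)
    qed
    finally show "(real k * t)^2 \<le> (1/8)^2" .
  qed simp
  have t_le: "t \<le> 1/8"
    using kt assms(4) t_nn by (smt (verit) mult_le_cancel_right1 of_nat_1 of_nat_mono)
  define G where "G = {r\<in>{1..R}. pmf p r \<le> 1/2}"
  define AG where "AG = (\<Sum>r\<in>G. pmf p r * (1 - pmf p r) ^ k)"
  have a_AG: "a \<le> 3 * AG"
    unfolding a_eq AG_def G_def using AG_bound[of "{1..R}" "pmf p" k] s1 assms(4) by simp
  have G_sub: "G \<subseteq> {1..R}" unfolding G_def by auto
  have finG: "finite G" using G_sub finite_subset by blast
  define w where "w = (\<lambda>y. if y \<in> G then (1 - pmf p y) ^ k else 0 :: real)"
  have w01: "\<And>x. 0 \<le> w x \<and> w x \<le> 1"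
    unfolding w_def by (auto simp: pmf_le_1 power_le_one)
  have Ew: "measure_pmf.expectation p w = AG"
  proof -
    have "measure_pmf.expectation p w = (\<Sum>y\<in>{1..R}. pmf p y *\<^sub>R w y)"
      by (rule integral_measure_pmf) (use assms(2) in auto)
    also have "\<dots> = (\<Sum>y\<in>{1..R}. if y \<in> G then pmf p y * (1 - pmf p y) ^ k else 0)"
      unfolding w_def by (intro sum.cong) auto
    also have "\<dots> = (\<Sum>y\<in>{1..R} \<inter> G. pmf p y * (1 - pmf p y) ^ k)"
      by (rule sum.inter_restrict[symmetric]) simp
    also have "{1..R} \<inter> G = G" using G_sub by auto
    finally show ?thesis unfolding AG_def .
  qed
  define ind where "ind = (\<lambda>(r::nat) (y::nat). if y = r then 1 else 0 :: real)"
  have ind01: "\<And>x. 0 \<le> ind r x \<and> ind r x \<le> 1" for r unfolding ind_def by auto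
  have Eind: "measure_pmf.expectation p (ind r) = pmf p r" for r
  proof -
    have "measure_pmf.expectation p (ind r) = (\<Sum>y\<in>{r}. pmf p y *\<^sub>R ind r y)"
      by (rule integral_measure_pmf) (auto simp: ind_def split: if_splits)
    thus ?thesis by (simp add: ind_def)
  qed
  define M where "M = Pi_pmf {..<N} 0 (\<lambda>_. p)"
  define B1 where "B1 = (\<lambda>r. {Y. t * (real N * (pmf p r + t)) \<le> t * (\<Sum>j<N. ind r (Y j))})"
  define B2 where "B2 = {Y. (-1) * (real N * AG / 2) \<le> (-1) * (\<Sum>j<N. w (Y j))}"
  have P1: "measure_pmf.prob M (B1 r) \<le> \<Delta> / (4 * R)" if "r \<in> G" for r
  proof -
    have rho: "0 \<le> pmf p r" "pmf p r \<le> 1/2" using that unfolding G_def by auto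
    have "measure_pmf.prob M (B1 r) \<le> exp (real N * measure_pmf.expectation p (ind r) * (exp t - 1) - t * (real N * (pmf p r + t)))"
      unfolding M_def B1_def by (rule tail_Pi[OF fin]) (rule ind01)
    hence "measure_pmf.prob M (B1 r) \<le> exp (real N * pmf p r * (exp t - 1) - t * (real N * (pmf p r + t)))"
      by (simp only: Eind)
    also have "\<dots> \<le> exp (- L)"
    proof -
      have "exp t \<le> 1 + t + t^2" using t_nn t_le by (intro exp_bound) auto
      hence "real N * pmf p r * (exp t - 1) \<le> real N * pmf p r * (t + t^2)"
        using Npos rho by (intro mult_left_mono) auto
      moreover have "real N * pmf p r * (t + t^2) - t * (real N * (pmf p r + t)) = - (real N * t^2) * (1 - pmf p r)"
        by (simp add: algebra_simps power2_eq_square)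
      moreover have "(real N * t^2) * (1/2) \<le> (real N * t^2) * (1 - pmf p r)"
        using rho Npos by (intro mult_left_mono) auto
      ultimately show ?thesis using Nt2 by simp
    qed
    also have "exp (- L) = \<Delta> / (4 * R)"
      unfolding L_def using assms(1,5) by (simp add: exp_minus)
    finally show ?thesis .
  qed
  have e1: "exp (-1::real) \<le> 3/8"
  proof -
    have "exp (1::real) \<ge> 8/3" using e_approx_32 by (simp add: abs_if split: if_splits)
    thus ?thesis by (simp add: exp_minus divide_simps)
  qed
  have P2: "measure_pmf.prob M B2 \<le> \<Delta> / 4"
  proof -
    have "measure_pmf.prob M B2 \<le> exp (real N * measure_pmf.expectation p w * (exp (-1) - 1) - (-1) * (real N * AG / 2))"
      unfolding M_def B2_def by (rule tail_Pi[OF fin]) (rule w01)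
    hence "measure_pmf.prob M B2 \<le> exp (real N * AG * (exp (-1) - 1) - (-1) * (real N * AG / 2))"
      by (simp only: Ew)
    also have "\<dots> \<le> exp (- ln (4 / \<Delta>))"
    proof -
      have AGnn: "0 \<le> real N * AG" using a_AG a_pos Npos by simp
      have "real N * AG * (exp (-1) - 1) \<le> real N * AG * (3/8 - 1)"
        using e1 AGnn by (intro mult_left_mono) auto
      moreover have "real N * a \<le> 3 * (real N * AG)" using a_AG Npos by simp
      moreover have "ln (4 / \<Delta>) = ln 2 + ln (2 / \<Delta>)"
      proof -
        have "ln (2 * (2 / \<Delta>)) = ln 2 + ln (2 / \<Delta>)" using assms(5) by (subst ln_mult) auto
        thus ?thesis by simp
      qed
      moreover have "ln 2 \<le> ln (2 / \<Delta>)" using assms(5,6) by (simp add: field_simps)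
      moreover have "real N * AG * (3/8 - 1) = -(5/8) * (real N * AG)" "- (- 1) * (real N * AG / 2) = (1/2) * (real N * AG)" by simp_all
      ultimately show ?thesis using NaL l2 by (subst exp_le_cancel_iff) linarith
    qed
    also have "\<dots> = \<Delta> / 4" using assms(5) by (simp add: exp_minus)
    finally show ?thesis .
  qed
  have Bad: "measure_pmf.prob M ((\<Union>r\<in>G. B1 r) \<union> B2) \<le> \<Delta> / 2"
  proof -
    have "measure_pmf.prob M ((\<Union>r\<in>G. B1 r) \<union> B2) \<le> measure_pmf.prob M (\<Union>r\<in>G. B1 r) + measure_pmf.prob M B2"
      by (rule measure_subadditive) (auto simp: measure_pmf.emeasure_eq_measure)
    also have "measure_pmf.prob M (\<Union>r\<in>G. B1 r) \<le> (\<Sum>r\<in>G. measure_pmf.prob M (B1 r))"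
      by (rule measure_pmf.finite_measure_subadditive_finite) (use finG in auto)
    also have "\<dots> \<le> (\<Sum>r\<in>G. \<Delta> / (4 * R))" by (intro sum_mono P1)
    also have "\<dots> = real (card G) * (\<Delta> / (4 * R))" by simp
    also have "\<dots> \<le> real R * (\<Delta> / (4 * R))"
    proof -
      have "card G \<le> card {1..R}" using G_sub by (intro card_mono) auto
      thus ?thesis using assms(5) by (intro mult_right_mono) auto
    qed
    also have "\<dots> = \<Delta> / 4" using assms(1) by simp
    finally show ?thesis using P2 by simp
  qed
  have Sub: "UNIV - ((\<Union>r\<in>G. B1 r) \<union> B2) \<subseteq> {Y. 1 - tau_hat N R k Y \<ge> (1 - tau p R k) / 8}"
  proof
    fix Y assume Y: "Y \<in> UNIV - ((\<Union>r\<in>G. B1 r) \<union> B2)"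
    define rh where "rh = rho_hat N Y"
    have cnt: "(\<Sum>j<N. ind r (Y j)) = real N * rh r" for r
      unfolding ind_def rh_def rho_hat_def using cnt_sum Npos by simp
    have rh01: "0 \<le> rh r \<and> rh r \<le> 1" for r
    proof -
      have "card {j\<in>{..<N}. Y j = r} \<le> card {..<N}" by (intro card_mono) auto
      thus ?thesis unfolding rh_def rho_hat_def using Npos by (simp add: divide_simps)
    qed
    have up: "rh r \<le> pmf p r + t" if "r \<in> G" for r
    proof -
      have "Y \<notin> B1 r" using Y that by auto
      hence "real N * rh r < real N * (pmf p r + t)" unfolding B1_def using t_nn cnt[of r] by simp
      thus ?thesis using Npos by simp
    qed
    have hw: "(\<Sum>j<N. w (Y j)) = real N * (\<Sum>r\<in>G. rh r * (1 - pmf p r) ^ k)"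
    proof -
      have "(\<Sum>j<N. w (Y j)) = (\<Sum>j<N. \<Sum>r\<in>G. if Y j = r then (1 - pmf p r) ^ k else 0)"
        unfolding w_def using finG by (intro sum.cong) (auto simp: sum.delta)
      also have "\<dots> = (\<Sum>r\<in>G. \<Sum>j<N. if Y j = r then (1 - pmf p r) ^ k else 0)"
        by (rule sum.swap)
      also have "\<dots> = (\<Sum>r\<in>G. (1 - pmf p r) ^ k * (\<Sum>j<N. ind r (Y j)))"
        unfolding ind_def by (intro sum.cong) (auto simp: sum_distrib_left intro!: sum.cong)
      also have "\<dots> = real N * (\<Sum>r\<in>G. rh r * (1 - pmf p r) ^ k)"
        unfolding cnt by (simp add: sum_distrib_left mult_ac)
      finally show ?thesis .
    qed
    have half: "AG / 2 < (\<Sum>r\<in>G. rh r * (1 - pmf p r) ^ k)"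
    proof -
      have "Y \<notin> B2" using Y by auto
      hence "real N * (AG / 2) < real N * (\<Sum>r\<in>G. rh r * (1 - pmf p r) ^ k)"
        unfolding B2_def using hw by simp
      thus ?thesis using Npos by simp
    qed
    have "(1 - tau p R k) / 8 = a / 8" by (simp add: a_def)
    also have "\<dots> \<le> (3/4) * (AG / 2)" using a_AG by simp
    also have "\<dots> \<le> (1 - 2 * real k * t) * (\<Sum>r\<in>G. rh r * (1 - pmf p r) ^ k)"
      using half kt a_AG a_pos by (intro mult_mono) auto
    also have "\<dots> = (\<Sum>r\<in>G. rh r * ((1 - pmf p r) ^ k * (1 - 2 * real k * t)))"
      by (simp add: sum_distrib_left mult_ac)
    also have "\<dots> \<le> (\<Sum>r\<in>G. rh r * (1 - rh r) ^ k)"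
    proof (intro sum_mono mult_left_mono)
      fix r assume r: "r \<in> G"
      have rho: "0 \<le> pmf p r" "pmf p r \<le> 1/2" using r unfolding G_def by auto
      have "(1 - pmf p r) ^ k * (1 - 2 * real k * t) \<le> (1 - pmf p r - t) ^ k"
        using key_pow[of t k "pmf p r"] rho kt t_nn t_le by simp
      also have "\<dots> \<le> (1 - rh r) ^ k"
        using up[OF r] rho t_le by (intro power_mono) auto
      finally show "(1 - pmf p r) ^ k * (1 - 2 * real k * t) \<le> (1 - rh r) ^ k" .
      show "0 \<le> rh r" using rh01 by auto
    qed
    also have "\<dots> \<le> (\<Sum>r\<in>{1..R}. rh r * (1 - rh r) ^ k)"
      using G_sub rh01 by (intro sum_mono2) auto
    also have "\<dots> = 1 - tau_hat N R k Y" by (simp add: tau_hat_def rh_def)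
    finally show "Y \<in> {Y. 1 - tau_hat N R k Y \<ge> (1 - tau p R k) / 8}" by simp
  qed
  have "1 - \<Delta> \<le> 1 - measure_pmf.prob M ((\<Union>r\<in>G. B1 r) \<union> B2)" using Bad assms(5) by simp
  also have "\<dots> = measure_pmf.prob M (space M - ((\<Union>r\<in>G. B1 r) \<union> B2))"
    by (rule measure_pmf.prob_compl[symmetric]) auto
  also have "\<dots> \<le> measure_pmf.prob M {Y. 1 - tau_hat N R k Y \<ge> (1 - tau p R k) / 8}"
    using Sub by (intro measure_pmf.finite_measure_mono) auto
  finally show ?thesis unfolding M_def .
qed

end
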